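(* Let $t\geq 2$ be an integer, $m=4t+2$ and $n=2^m+1$, and let $x$ be an odd integer. Then: (1) if $1\leq x\leq 2^{2t+1}-1$, $x$ is a coset leader; (2) if $2^{2t+1}+3\leq x\leq 2^{2t+2}-5$, $x$ is a coset leader; (3) if $2^{2t+2}+5\leq x\leq 2^{2t+2}+2^{2t}-3$, $x$ is a coset leader; (4) if $2^{2t+2}+2^{2t}+3\leq x\leq 2^{2t+2}+2^{2t+1}-3$, $x$ is a coset leader; (5) if $x=2^{2t+1}+1$, or $2^{2t+2}-3\leq x\leq 2^{2t+2}+3$, or $2^{2t+2}+2^{2t}-1\leq x\leq 2^{2t+2}+2^{2t}+1$, or $2^{2t+2}+2^{2t+1}-1\leq x\leq 2^{2t+2}+2^{2t+1}+3$, then $x$ is not a coset leader.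
   Context: For $n=2^m+1$ and an integer $x$, the 2-cyclotomic coset of $x$ modulo $n$ is $C_x=\{x\cdot 2^{j} \bmod n : j\geq 0\}\subseteq\{0,1,\dots,n-1\}$. For $0\leq x\leq n-1$, "$x$ is a coset leader" means that $x$ is the smallest element of $C_x$. *)

theory Defs
  imports Main
begin

definition cyc_coset :: "nat \<Rightarrow> nat \<Rightarrow> nat set" where
  "cyc_coset n x = {(x * 2 ^ j) mod n | j. True}"

definition coset_leader :: "nat \<Rightarrow> nat \<Rightarrow> bool" where
  "coset_leader n x \<longleftrightarrow> x < n \<and> x \<in> cyc_coset n x \<and> (\<forall>y \<in> cyc_coset n x. x \<le> y)"

end

theory Submission
  imports Defs
begin


definition G :: "nat \<Rightarrow> nat \<Rightarrow> nat \<Rightarrow> nat" where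
  "G x m p = (x mod 2^p) * 2^(m-p) - x div 2^p"

lemma G_mod:
  fixes x m p n :: nat
  assumes "1 \<le> p" "p \<le> m" "odd x" "x < 2^m" "n = 2^m+1"
  shows "x * 2^(m-p) mod n = G x m p \<and> 0 < G x m p \<and> G x m p < n"
proof -
  define r where "r = m - p"
  define H where "H = x div 2^p"
  define L where "L = x mod 2^p"
  have m: "2^m = (2::nat)^p * 2^r" using assms(2) by (simp add: r_def power_add[symmetric])
  have x: "x = H*2^p + L" unfolding H_def L_def by (metis div_mult_mod_eq)
  have "L mod 2 = x mod 2" unfolding L_def using assms(1)
    by (simp add: mod_mod_cancel le_imp_power_dvd[of 1 p 2, simplified])
  hence L1: "L \<ge> 1" using assms(3) by (metis odd_iff_mod_2_eq_one not_less_eq_eq le_zero_eq mod_0 odd_one less_one not_less zero_neq_one one_mod_two_eq_one)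
  have "H*2^p \<le> x" using x by simp
  hence "H * 2^p < 2^r * 2^p" using assms(4) m by (metis le_less_trans mult.commute)
  hence Hr: "H < 2^r" by (metis mult_less_cancel2)
  have Lp: "L < 2^p" by (simp add: L_def)
  hence "L + 1 \<le> 2^p" by simp
  hence "(L+1) * 2^r \<le> 2^p * 2^r" by (rule mult_right_mono) simp
  hence Lr: "L * 2^r + 2^r \<le> 2^m" using m by (simp add: algebra_simps)
  have "L * 2^r \<ge> 2^r" using L1 by simp
  hence HL: "H < L * 2^r" using Hr by linarith
  have e: "x * 2^r = (L * 2^r - H) + H * n"
    using x m HL assms(5) by (simp add: algebra_simps)
  have lt: "L * 2^r - H < n" using Lr assms(5) by simp
  have "x * 2^r mod n = L*2^r - H" unfolding e using lt by simp
  moreover have "G x m p = L*2^r - H" by (simp add: G_def L_def H_def r_def)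
  ultimately show ?thesis using HL lt r_def by simp
qed

lemma G_high:
  fixes x r g m n :: nat
  assumes "x*2^r mod n = g" "0 < g" "g < n" "n = 2^m+1"
  shows "x*2^(m+r) mod n = n - g"
proof -
  define c where "c = x*2^r div n"
  have e1: "x*2^r = g + c*n" using assms(1) unfolding c_def by (metis div_mult_mod_eq add.commute)
  have "g*2^m + g = g*n" using assms(4) by (simp add: algebra_simps)
  hence e2: "g*2^m = (n - g) + (g - 1)*n" using assms(2,3) by (simp add: algebra_simps diff_mult_distrib)
  have "x*2^(m+r) = x*2^r*2^m" by (simp add: power_add algebra_simps)
  also have "\<dots> = g*2^m + (c*2^m)*n" using e1 by (simp add: algebra_simps)
  also have "\<dots> = (n - g) + ((g-1) + c*2^m)*n" using e2 by (simp add: algebra_simps)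
  finally have "x*2^(m+r) mod n = (n - g) mod n" by simp
  thus ?thesis using assms(2,3) by simp
qed

lemma sq1: "(a::nat) \<ge> 1 \<Longrightarrow> a*a = 1 + (a-1)*(a+1)"
  by (cases a) (auto simp: algebra_simps)

lemma period:
  fixes x j m n :: nat
  assumes "m \<ge> 1" "n = 2^m+1"
  shows "x*2^j mod n = x*2^(j mod (2*m)) mod n"
proof -
  have n1: "n > 1" using assms by simp
  have pm: "(2::nat)^m \<ge> 1" by simp
  have e: "(2::nat)^(2*m) = 1 + (2^m-1)*n"
  proof -
    have "(2::nat)^(2*m) = 2^m*2^m" by (simp add: mult_2 power_add)
    also have "\<dots> = 1 + (2^m-1)*(2^m+1)" using sq1[OF pm] .
    finally show ?thesis using assms by simp
  qed
  have p1: "(2::nat)^(2*m) mod n = 1" unfolding e using n1 by (simp only: mod_mult_self1 mod_less)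
  define q where "q = j div (2*m)"
  define r where "r = j mod (2*m)"
  have "j = 2*m*q + r" unfolding q_def r_def by simp
  hence "x*2^j = x*2^r * (2^(2*m))^q" by (simp only: power_add power_mult[symmetric] mult.commute mult.left_commute)
  hence "x*2^j mod n = x*2^r * ((2^(2*m))^q mod n) mod n" by (metis mod_mult_right_eq)
  also have "(2^(2*m))^q mod n = 1" using p1 n1 by (metis power_mod power_one mod_less)
  finally show ?thesis unfolding r_def by simp
qed


lemma leader:
  fixes x m n :: nat
  assumes "m \<ge> 1" "n = 2^m+1" "odd x" "x < 2^m"
    and P: "\<And>p. 1\<le>p \<Longrightarrow> p\<le>m \<Longrightarrow> x \<le> G x m p \<and> G x m p + x \<le> n"
  shows "coset_leader n x"
  unfolding coset_leader_def cyc_coset_def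
proof (intro conjI ballI)
  show xn: "x < n" using assms by simp
  show "x \<in> {x * 2 ^ j mod n |j. True}" using xn by (auto intro!: exI[of _ 0])
  fix y assume "y \<in> {x * 2 ^ j mod n |j. True}"
  then obtain j where y: "y = x*2^j mod n" by auto
  define r where "r = j mod (2*m)"
  have y2: "y = x*2^r mod n" using y period[OF assms(1,2)] r_def by simp
  have r2: "r < 2*m" using assms(1) r_def by simp
  show "x \<le> y"
  proof (cases "r < m")
    case True
    define p where "p = m - r"
    have p: "1 \<le> p" "p \<le> m" "r = m - p" using True p_def by auto
    have "y = G x m p" using G_mod[OF p(1,2) assms(3,4,2)] y2 p(3) by simp
    thus ?thesis using P[OF p(1,2)] by simp
  next
    case False
    define p where "p = m - (r - m)"
    have p: "1 \<le> p" "p \<le> m" "r = m + (m - p)" using False r2 p_def by auto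
    have g: "x * 2^(m-p) mod n = G x m p" "0 < G x m p" "G x m p < n" using G_mod[OF p(1,2) assms(3,4,2)] by auto
    have "y = n - G x m p" using G_high[OF g assms(2)] y2 p(3) by simp
    thus ?thesis using P[OF p(1,2)] by linarith
  qed
qed

lemma nonleader1:
  fixes x m n p :: nat
  assumes "1\<le>p" "p\<le>m" "odd x" "x<2^m" "n=2^m+1" "G x m p < x"
  shows "\<not> coset_leader n x"
proof
  assume "coset_leader n x"
  hence "x \<le> x*2^(m-p) mod n" unfolding coset_leader_def cyc_coset_def by blast
  thus False using G_mod[OF assms(1-5)] assms(6) by simp
qed

lemma nonleader2:
  fixes x m n p :: nat
  assumes "1\<le>p" "p\<le>m" "odd x" "x<2^m" "n=2^m+1" "G x m p + x > n"
  shows "\<not> coset_leader n x"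
proof
  assume "coset_leader n x"
  hence "x \<le> x*2^(m+(m-p)) mod n" unfolding coset_leader_def cyc_coset_def by blast
  moreover have g: "x * 2^(m-p) mod n = G x m p" "0 < G x m p" "G x m p < n" using G_mod[OF assms(1-5)] by auto
  ultimately show False using G_high[OF g assms(5)] assms(6) by simp
qed


lemma lincore:
  fixes Q w h e lo u Y QQ :: nat
  assumes "Q \<ge> 8" "lo \<le> w" "w + u \<le> Q" "e \<le> 3"
   and "(h,lo,u) \<in> {(0,1,1),(1,1,1),(2,1,1),(3,1,1),(4,3,1),(5,1,1),(6,1,1),(7,1,5),(8,5,1),(9,1,3),(10,3,1),(11,1,3)}"
   and "lo*Q \<le> Y" "Y + u*Q \<le> QQ" "8*Q \<le> QQ"
  shows "h*Q+w \<le> (h mod 2^e)*2^(4-e)*QQ + 2^(4-e)*Y - h div 2^e \<and>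
    (h mod 2^e)*2^(4-e)*QQ + 2^(4-e)*Y - h div 2^e + (h*Q+w) \<le> 16*QQ+1"
proof -
  have e: "e = 0 \<or> e = 1 \<or> e = 2 \<or> e = 3" using assms(4) by arith
  show ?thesis using assms(5) e assms(1,2,3,6,7,8) by auto
qed

lemma hw:
  fixes x Q h :: nat
  assumes "Q*h \<le> x" "x < Q*Suc h"
  shows "x div Q = h \<and> x mod Q = x - Q*h"
proof -
  have d: "x div Q = h" using div_nat_eqI[OF assms] .
  have "x mod Q = x - Q*(x div Q)" by (simp add: minus_mult_div_eq_mod[symmetric])
  thus ?thesis using d by simp
qed

lemma pow_facts:
  fixes t Q :: nat
  assumes "t \<ge> 2" "Q = 2^(2*t-1)"
  shows "Q \<ge> 8" "(2::nat)^(4*t+2) = 16*(Q*Q)"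
proof -
  have "(2::nat)^3 \<le> 2^(2*t-1)" using assms(1) by (intro power_increasing) auto
  thus "Q \<ge> 8" using assms(2) by simp
  have "4*t+2 = (2*t-1) + (2*t-1) + 4" using assms(1) by simp
  hence "(2::nat)^(4*t+2) = 2^(2*t-1)*2^(2*t-1)*16" by (simp only: power_add) simp
  thus "(2::nat)^(4*t+2) = 16*(Q*Q)" using assms(2) by simp
qed

lemma Gspec:
  fixes t Q m e x :: nat
  assumes "t \<ge> 2" "Q = 2^(2*t-1)" "m = 4*t+2" "e \<le> 3"
  shows "G x m (2*t-1+e) = (x div Q mod 2^e)*2^(4-e)*(Q*Q) + 2^(4-e)*(Q*(x mod Q)) - x div Q div 2^e"
proof -
  have a: "(2::nat)^(2*t-1+e) = Q*2^e" using assms(2) by (simp add: power_add)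
  have "m - (2*t-1+e) = (2*t-1) + (4-e)" using assms by simp
  hence b: "(2::nat)^(m - (2*t-1+e)) = Q*2^(4-e)" using assms(2) by (simp add: power_add)
  have "G x m (2*t-1+e) = (Q * (x div Q mod 2^e) + x mod Q) * (Q*2^(4-e)) - x div Q div 2^e"
    unfolding G_def a b by (simp add: mod_mult2_eq div_mult2_eq)
  thus ?thesis by (simp add: algebra_simps)
qed

lemma low_generic:
  fixes t Q m x p :: nat
  assumes "t \<ge> 2" "Q = 2^(2*t-1)" "m = 4*t+2" "1 \<le> p" "p \<le> 2*t-2" "odd x" "x \<le> 12*Q"
  shows "x \<le> G x m p \<and> G x m p + x \<le> 2^m+1"
proof -
  define a where "a = (2::nat)^p"
  define b where "b = (2::nat)^(m-p)"
  define H where "H = x div a"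
  define L where "L = x mod a"
  have ab: "a*b = 2^m" unfolding a_def b_def using assms by (simp add: power_add[symmetric])
  have "(2::nat)^(2*t-1+5) \<le> 2^(m-p)" using assms by (intro power_increasing) auto
  hence b32: "32*Q \<le> b" unfolding b_def using assms(2) by (simp add: power_add)
  have "L mod 2 = x mod 2" unfolding L_def a_def using assms(4)
    by (simp add: mod_mod_cancel le_imp_power_dvd[of 1 p 2, simplified])
  hence L1: "L \<ge> 1" using assms(6) by (metis odd_iff_mod_2_eq_one less_one not_less zero_neq_one mod_0)
  have La: "L + 1 \<le> a" unfolding L_def a_def by (simp add: Suc_le_eq)
  have Hx: "H \<le> x" unfolding H_def by simp
  have "1*b \<le> L*b" using L1 by (rule mult_le_mono1)
  hence Lb: "b \<le> L*b" by simp
  have "(L+1)*b \<le> a*b" using La by (rule mult_le_mono1)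
  hence Lb2: "L*b + b \<le> 2^m" using ab by (simp add: algebra_simps)
  have "G x m p = L*b - H" unfolding G_def L_def H_def a_def b_def by simp
  thus ?thesis using Lb Lb2 Hx b32 assms(7) by linarith
qed

lemma high_generic:
  fixes t Q m x p :: nat
  assumes "t \<ge> 2" "Q = 2^(2*t-1)" "m = 4*t+2" "2*t+3 \<le> p" "p \<le> m" "x \<le> 12*Q"
  shows "x \<le> G x m p \<and> G x m p + x \<le> 2^m+1"
proof -
  have Q8: "Q \<ge> 8" and m16: "(2::nat)^m = 16*(Q*Q)" using pow_facts[OF assms(1,2)] assms(3) by auto
  have "(2::nat)^(2*t-1+4) \<le> 2^p" using assms by (intro power_increasing) auto
  hence "16*Q \<le> 2^p" using assms(2) by (simp add: power_add)
  hence xa: "x < 2^p" using assms(6) Q8 by simp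
  have "(2::nat)^(m-p) \<le> 2^(2*t-1)" using assms by (intro power_increasing) auto
  hence bQ: "(2::nat)^(m-p) \<le> Q" using assms(2) by simp
  have G: "G x m p = x * 2^(m-p)" unfolding G_def using xa by simp
  have "x * 2^(m-p) \<le> 12*(Q*Q)" using mult_le_mono[OF assms(6) bQ] by (simp add: mult.assoc)
  moreover have "x*1 \<le> x*2^(m-p)" by (rule mult_le_mono2) simp
  moreover have "12*Q \<le> 4*(Q*Q)" using Q8 by simp
  ultimately show ?thesis using G m16 assms(6) by linarith
qed

lemma leader_triple:
  fixes t Q m n x lo u :: nat
  assumes "t \<ge> 2" "Q = 2^(2*t-1)" "m = 4*t+2" "n = 2^m+1" "odd x" "x \<le> 12*Q"
   and "(x div Q,lo,u) \<in> {(0,1,1),(1,1,1),(2,1,1),(3,1,1),(4,3,1),(5,1,1),(6,1,1),(7,1,5),(8,5,1),(9,1,3),(10,3,1),(11,1,3)}"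
   and "lo \<le> x mod Q" "x mod Q + u \<le> Q"
  shows "coset_leader n x"
proof -
  have Q8: "Q \<ge> 8" and m16: "(2::nat)^m = 16*(Q*Q)" using pow_facts[OF assms(1,2)] assms(3) by auto
  have "Q \<le> Q*Q" using Q8 by simp
  hence xm: "x < 2^m" using m16 assms(6) Q8 by linarith
  show ?thesis
  proof (rule leader[OF _ assms(4,5) xm])
    show "1 \<le> m" using assms(3) by simp
    fix p assume p: "1 \<le> p" "p \<le> m"
    show "x \<le> G x m p \<and> G x m p + x \<le> n"
    proof (cases "p \<le> 2*t-2")
      case True thus ?thesis using low_generic[OF assms(1,2,3) p(1) True assms(5,6)] assms(4) by simp
    next
      case F1: False
      show ?thesis
      proof (cases "2*t+3 \<le> p")
        case True thus ?thesis using high_generic[OF assms(1,2,3) True p(2) assms(6)] assms(4) by simp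
      next
        case False
        define e where "e = p - (2*t-1)"
        have pe: "p = 2*t-1+e" "e \<le> 3" using F1 False e_def by auto
        have lo1: "lo*Q \<le> Q*(x mod Q)" using mult_le_mono1[OF assms(8), of Q] by (simp add: mult.commute)
        have up: "Q*(x mod Q) + u*Q \<le> Q*Q" using mult_le_mono1[OF assms(9), of Q] by (simp add: algebra_simps)
        have Q88: "8*Q \<le> Q*Q" using Q8 by simp
        have "x = x div Q * Q + x mod Q" by simp
        from lincore[OF Q8 assms(8,9) pe(2) assms(7) lo1 up Q88] this
        show ?thesis unfolding pe(1) Gspec[OF assms(1,2,3) pe(2)] assms(4) m16 by simp
      qed
    qed
  qed
qed


lemma trip:
  fixes t Q m n x lo u h :: nat
  assumes "t \<ge> 2" "Q = 2^(2*t-1)" "m = 4*t+2" "n = 2^m+1" "odd x" "x \<le> 12*Q"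
   and "(h,lo,u) \<in> {(0,1,1),(1,1,1),(2,1,1),(3,1,1),(4,3,1),(5,1,1),(6,1,1),(7,1,5),(8,5,1),(9,1,3),(10,3,1),(11,1,3)}"
   and "Q*h \<le> x" "x < Q*Suc h" "lo = 1 \<or> lo \<le> x - Q*h" "u = 1 \<or> x - Q*h + u \<le> Q"
  shows "coset_leader n x"
proof -
  have d: "x div Q = h" "x mod Q = x - Q*h" using hw[OF assms(8,9)] by auto
  have "even Q" using assms(1,2) by simp
  hence "x mod Q mod 2 = x mod 2" by (simp add: mod_mod_cancel)
  hence w1: "x mod Q \<ge> 1" using assms(5) by (metis odd_iff_mod_2_eq_one less_one not_less zero_neq_one mod_0)
  have Q0: "Q > 0" using assms(2) by simp
  have w2: "x mod Q < Q" using Q0 by simp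
  show ?thesis
  proof (rule leader_triple[OF assms(1-6)])
    show "(x div Q, lo, u) \<in> {(0,1,1),(1,1,1),(2,1,1),(3,1,1),(4,3,1),(5,1,1),(6,1,1),(7,1,5),(8,5,1),(9,1,3),(10,3,1),(11,1,3)}"
      using d assms(7) by simp
    show "lo \<le> x mod Q" using assms(10) d w1 by auto
    show "x mod Q + u \<le> Q" using assms(11) d w2 by auto
  qed
qed

lemma nonleader_spec:
  fixes t Q m n x e :: nat
  assumes "t \<ge> 2" "Q = 2^(2*t-1)" "m = 4*t+2" "n = 2^m+1" "odd x" "x \<le> 13*Q" "e \<le> 3"
   and "(x div Q mod 2^e)*2^(4-e)*(Q*Q) + 2^(4-e)*(Q*(x mod Q)) - x div Q div 2^e < x \<or>
        (x div Q mod 2^e)*2^(4-e)*(Q*Q) + 2^(4-e)*(Q*(x mod Q)) - x div Q div 2^e + x > 16*(Q*Q)+1"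
  shows "\<not> coset_leader n x"
proof -
  have Q8: "Q \<ge> 8" and m16: "(2::nat)^m = 16*(Q*Q)" using pow_facts[OF assms(1,2)] assms(3) by auto
  have "Q \<le> Q*Q" using Q8 by simp
  hence xm: "x < 2^m" using m16 assms(6) Q8 by linarith
  have p: "1 \<le> 2*t-1+e" "2*t-1+e \<le> m" using assms(1,3,7) by auto
  note g = Gspec[OF assms(1,2,3,7), of x]
  from assms(8) show ?thesis
  proof
    assume "(x div Q mod 2^e)*2^(4-e)*(Q*Q) + 2^(4-e)*(Q*(x mod Q)) - x div Q div 2^e < x"
    thus ?thesis using nonleader1[OF p assms(5) xm assms(4)] g by simp
  next
    assume "(x div Q mod 2^e)*2^(4-e)*(Q*Q) + 2^(4-e)*(Q*(x mod Q)) - x div Q div 2^e + x > 16*(Q*Q)+1"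
    thus ?thesis using nonleader2[OF p assms(5) xm assms(4)] g m16 assms(4) by simp
  qed
qed


lemma NLw:
  fixes t Q m n x e h w :: nat
  assumes "t \<ge> 2" "Q = 2^(2*t-1)" "m = 4*t+2" "n = 2^m+1" "odd x" "x \<le> 13*Q" "e \<le> 3"
   and "Q*h \<le> x" "x < Q*Suc h" "x - Q*h = w"
   and "(h mod 2^e)*2^(4-e)*(Q*Q) + 2^(4-e)*(Q*w) - h div 2^e < x \<or>
        (h mod 2^e)*2^(4-e)*(Q*Q) + 2^(4-e)*(Q*w) - h div 2^e + x > 16*(Q*Q)+1"
  shows "\<not> coset_leader n x"
  using nonleader_spec[OF assms(1-7)] hw[OF assms(8,9)] assms(10,11) by simp

lemma NL:
  fixes t Q m n x e h :: nat
  assumes "t \<ge> 2" "Q = 2^(2*t-1)" "m = 4*t+2" "n = 2^m+1" "odd x" "x \<le> 13*Q" "e \<le> 3"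
   and "Q*h \<le> x" "x < Q*Suc h"
   and "(h mod 2^e)*2^(4-e)*(Q*Q) + 2^(4-e)*(Q*(x - Q*h)) - h div 2^e < x \<or>
        (h mod 2^e)*2^(4-e)*(Q*Q) + 2^(4-e)*(Q*(x - Q*h)) - h div 2^e + x > 16*(Q*Q)+1"
  shows "\<not> coset_leader n x"
  using nonleader_spec[OF assms(1-7)] hw[OF assms(8,9)] assms(10) by simp

theorem theorem4p1:
  fixes t m n x :: nat
  assumes "t \<ge> 2" and "m = 4 * t + 2" and "n = 2 ^ m + 1" and "odd x"
  shows "(1 \<le> x \<and> x \<le> 2 ^ (2*t+1) - 1 \<longrightarrow> coset_leader n x)
    \<and> (2 ^ (2*t+1) + 3 \<le> x \<and> x \<le> 2 ^ (2*t+2) - 5 \<longrightarrow> coset_leader n x)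
    \<and> (2 ^ (2*t+2) + 5 \<le> x \<and> x \<le> 2 ^ (2*t+2) + 2 ^ (2*t) - 3 \<longrightarrow> coset_leader n x)
    \<and> (2 ^ (2*t+2) + 2 ^ (2*t) + 3 \<le> x \<and> x \<le> 2 ^ (2*t+2) + 2 ^ (2*t+1) - 3 \<longrightarrow> coset_leader n x)
    \<and> ((x = 2 ^ (2*t+1) + 1
        \<or> (2 ^ (2*t+2) - 3 \<le> x \<and> x \<le> 2 ^ (2*t+2) + 3)
        \<or> (2 ^ (2*t+2) + 2 ^ (2*t) - 1 \<le> x \<and> x \<le> 2 ^ (2*t+2) + 2 ^ (2*t) + 1)
        \<or> (2 ^ (2*t+2) + 2 ^ (2*t+1) - 1 \<le> x \<and> x \<le> 2 ^ (2*t+2) + 2 ^ (2*t+1) + 3))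
       \<longrightarrow> \<not> coset_leader n x)"
proof -
  define Q where "Q = (2::nat)^(2*t-1)"
  have Q8: "Q \<ge> 8" using pow_facts[OF assms(1) Q_def] by auto
  have QQ: "8*Q \<le> Q*Q" using Q8 by simp
  have P1: "(2::nat)^(2*t+1) = 4*Q"
  proof -
    have "(2::nat)^(2*t+1) = 2^((2*t-1)+2)" by (rule arg_cong[where f="\<lambda>k. (2::nat)^k"]) (use assms(1) in simp)
    thus ?thesis unfolding Q_def power_add by simp
  qed
  have P2: "(2::nat)^(2*t+2) = 8*Q"
  proof -
    have "(2::nat)^(2*t+2) = 2^((2*t-1)+3)" by (rule arg_cong[where f="\<lambda>k. (2::nat)^k"]) (use assms(1) in simp)
    thus ?thesis unfolding Q_def power_add by simp
  qed
  have P3: "(2::nat)^(2*t) = 2*Q"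
  proof -
    have "(2::nat)^(2*t) = 2^((2*t-1)+1)" by (rule arg_cong[where f="\<lambda>k. (2::nat)^k"]) (use assms(1) in simp)
    thus ?thesis unfolding Q_def power_add by simp
  qed
  note P = P1 P2 P3
  have "even Q" unfolding Q_def using assms(1) by simp
  then obtain R where R: "Q = 2*R" by blast
  note T = trip[OF assms(1) Q_def assms(2,3,4)]
  note N = NLw[OF assms(1) Q_def assms(2,3,4)]
  show ?thesis unfolding P
  proof (intro conjI impI)
    assume a: "1 \<le> x \<and> x \<le> 4 * Q - 1"
    consider "x < Q*1" | "Q*1 \<le> x \<and> x < Q*2" | "Q*2 \<le> x \<and> x < Q*3" | "Q*3 \<le> x" by linarith
    thus "coset_leader n x"
    proof cases
      case 1 thus ?thesis using a by (intro T[where h=0 and lo=1 and u=1]) auto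
    next
      case 2 thus ?thesis using a by (intro T[where h=1 and lo=1 and u=1]) auto
    next
      case 3 thus ?thesis using a by (intro T[where h=2 and lo=1 and u=1]) auto
    next
      case 4 thus ?thesis using a by (intro T[where h=3 and lo=1 and u=1]) auto
    qed
  next
    assume a: "4 * Q + 3 \<le> x \<and> x \<le> 8 * Q - 5"
    consider "x < Q*5" | "Q*5 \<le> x \<and> x < Q*6" | "Q*6 \<le> x \<and> x < Q*7" | "Q*7 \<le> x" by linarith
    thus "coset_leader n x"
    proof cases
      case 1 thus ?thesis using a by (intro T[where h=4 and lo=3 and u=1]) auto
    next
      case 2 thus ?thesis using a by (intro T[where h=5 and lo=1 and u=1]) auto
    next
      case 3 thus ?thesis using a by (intro T[where h=6 and lo=1 and u=1]) auto
    next
      case 4 thus ?thesis using a by (intro T[where h=7 and lo=1 and u=5]) auto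
    qed
  next
    assume a: "8 * Q + 5 \<le> x \<and> x \<le> 8 * Q + 2 * Q - 3"
    consider "x < Q*9" | "Q*9 \<le> x" by linarith
    thus "coset_leader n x"
    proof cases
      case 1 thus ?thesis using a by (intro T[where h=8 and lo=5 and u=1]) auto
    next
      case 2 thus ?thesis using a by (intro T[where h=9 and lo=1 and u=3]) auto
    qed
  next
    assume a: "8 * Q + 2 * Q + 3 \<le> x \<and> x \<le> 8 * Q + 4 * Q - 3"
    consider "x < Q*11" | "Q*11 \<le> x" by linarith
    thus "coset_leader n x"
    proof cases
      case 1 thus ?thesis using a by (intro T[where h=10 and lo=3 and u=1]) auto
    next
      case 2 thus ?thesis using a by (intro T[where h=11 and lo=1 and u=3]) auto
    qed
  next
    assume a: "x = 4 * Q + 1 \<or> 8 * Q - 3 \<le> x \<and> x \<le> 8 * Q + 3 \<or>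
      8 * Q + 2 * Q - 1 \<le> x \<and> x \<le> 8 * Q + 2 * Q + 1 \<or>
      8 * Q + 4 * Q - 1 \<le> x \<and> x \<le> 8 * Q + 4 * Q + 3"
    have s3: "Q*(Q-3) = Q*Q - 3*Q" "Q*(Q-1) = Q*Q - Q" "Q*(Q - Suc 0) = Q*Q - Q" by (simp_all add: diff_mult_distrib2)
    have Q3: "3*Q \<le> Q*Q" "Q \<le> Q*Q" using Q8 by simp_all
    have C_4_2: "\<not> coset_leader n x" if xe: "x = 4*Q+1"
    proof (rule N[where h=4 and e=2 and w="1"])
      show "x \<le> 13*Q" "2 \<le> (3::nat)" "Q*4 \<le> x" "x < Q*Suc 4" "x - Q*4 = 1" using xe Q8 by simp_all
      show "(4 mod 2^2)*2^(4-2)*(Q*Q) + 2^(4-2)*(Q*(1)) - 4 div 2^2 < x \<or>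
        (4 mod 2^2)*2^(4-2)*(Q*Q) + 2^(4-2)*(Q*(1)) - 4 div 2^2 + x > 16*(Q*Q)+1"
        using xe Q8 by (simp add: s3; use Q3 in linarith)
    qed
    have C_7_3: "\<not> coset_leader n x" if xe: "x = 8*Q-3"
    proof (rule N[where h=7 and e=3 and w="Q-3"])
      show "x \<le> 13*Q" "3 \<le> (3::nat)" "Q*7 \<le> x" "x < Q*Suc 7" "x - Q*7 = Q-3" using xe Q8 by simp_all
      show "(7 mod 2^3)*2^(4-3)*(Q*Q) + 2^(4-3)*(Q*(Q-3)) - 7 div 2^3 < x \<or>
        (7 mod 2^3)*2^(4-3)*(Q*Q) + 2^(4-3)*(Q*(Q-3)) - 7 div 2^3 + x > 16*(Q*Q)+1"
        using xe Q8 by (simp add: s3; use Q3 in linarith)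
    qed
    have C_7_2: "\<not> coset_leader n x" if xe: "x = 8*Q-1"
    proof (rule N[where h=7 and e=2 and w="Q-1"])
      show "x \<le> 13*Q" "2 \<le> (3::nat)" "Q*7 \<le> x" "x < Q*Suc 7" "x - Q*7 = Q-1" using xe Q8 by simp_all
      show "(7 mod 2^2)*2^(4-2)*(Q*Q) + 2^(4-2)*(Q*(Q-1)) - 7 div 2^2 < x \<or>
        (7 mod 2^2)*2^(4-2)*(Q*Q) + 2^(4-2)*(Q*(Q-1)) - 7 div 2^2 + x > 16*(Q*Q)+1"
        using xe Q8 by (simp add: s3; use Q3 in linarith)
    qed
    have C_8_1: "\<not> coset_leader n x" if xe: "x = 8*Q+1"
    proof (rule N[where h=8 and e=1 and w="1"])
      show "x \<le> 13*Q" "1 \<le> (3::nat)" "Q*8 \<le> x" "x < Q*Suc 8" "x - Q*8 = 1" using xe Q8 by simp_all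
      show "(8 mod 2^1)*2^(4-1)*(Q*Q) + 2^(4-1)*(Q*(1)) - 8 div 2^1 < x \<or>
        (8 mod 2^1)*2^(4-1)*(Q*Q) + 2^(4-1)*(Q*(1)) - 8 div 2^1 + x > 16*(Q*Q)+1"
        using xe Q8 by (simp add: s3; use Q3 in linarith)
    qed
    have C_8_3: "\<not> coset_leader n x" if xe: "x = 8*Q+3"
    proof (rule N[where h=8 and e=3 and w="3"])
      show "x \<le> 13*Q" "3 \<le> (3::nat)" "Q*8 \<le> x" "x < Q*Suc 8" "x - Q*8 = 3" using xe Q8 by simp_all
      show "(8 mod 2^3)*2^(4-3)*(Q*Q) + 2^(4-3)*(Q*(3)) - 8 div 2^3 < x \<or>
        (8 mod 2^3)*2^(4-3)*(Q*Q) + 2^(4-3)*(Q*(3)) - 8 div 2^3 + x > 16*(Q*Q)+1"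
        using xe Q8 by (simp add: s3; use Q3 in linarith)
    qed
    have C_9_1: "\<not> coset_leader n x" if xe: "x = 10*Q-1"
    proof (rule N[where h=9 and e=1 and w="Q-1"])
      show "x \<le> 13*Q" "1 \<le> (3::nat)" "Q*9 \<le> x" "x < Q*Suc 9" "x - Q*9 = Q-1" using xe Q8 by simp_all
      show "(9 mod 2^1)*2^(4-1)*(Q*Q) + 2^(4-1)*(Q*(Q-1)) - 9 div 2^1 < x \<or>
        (9 mod 2^1)*2^(4-1)*(Q*Q) + 2^(4-1)*(Q*(Q-1)) - 9 div 2^1 + x > 16*(Q*Q)+1"
        using xe Q8 by (simp add: s3; use Q3 in linarith)
    qed
    have C_10_1: "\<not> coset_leader n x" if xe: "x = 10*Q+1"
    proof (rule N[where h=10 and e=1 and w="1"])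
      show "x \<le> 13*Q" "1 \<le> (3::nat)" "Q*10 \<le> x" "x < Q*Suc 10" "x - Q*10 = 1" using xe Q8 by simp_all
      show "(10 mod 2^1)*2^(4-1)*(Q*Q) + 2^(4-1)*(Q*(1)) - 10 div 2^1 < x \<or>
        (10 mod 2^1)*2^(4-1)*(Q*Q) + 2^(4-1)*(Q*(1)) - 10 div 2^1 + x > 16*(Q*Q)+1"
        using xe Q8 by (simp add: s3; use Q3 in linarith)
    qed
    have C_11_1: "\<not> coset_leader n x" if xe: "x = 12*Q-1"
    proof (rule N[where h=11 and e=1 and w="Q-1"])
      show "x \<le> 13*Q" "1 \<le> (3::nat)" "Q*11 \<le> x" "x < Q*Suc 11" "x - Q*11 = Q-1" using xe Q8 by simp_all
      show "(11 mod 2^1)*2^(4-1)*(Q*Q) + 2^(4-1)*(Q*(Q-1)) - 11 div 2^1 < x \<or>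
        (11 mod 2^1)*2^(4-1)*(Q*Q) + 2^(4-1)*(Q*(Q-1)) - 11 div 2^1 + x > 16*(Q*Q)+1"
        using xe Q8 by (simp add: s3; use Q3 in linarith)
    qed
    have C_12_1: "\<not> coset_leader n x" if xe: "x = 12*Q+1"
    proof (rule N[where h=12 and e=1 and w="1"])
      show "x \<le> 13*Q" "1 \<le> (3::nat)" "Q*12 \<le> x" "x < Q*Suc 12" "x - Q*12 = 1" using xe Q8 by simp_all
      show "(12 mod 2^1)*2^(4-1)*(Q*Q) + 2^(4-1)*(Q*(1)) - 12 div 2^1 < x \<or>
        (12 mod 2^1)*2^(4-1)*(Q*Q) + 2^(4-1)*(Q*(1)) - 12 div 2^1 + x > 16*(Q*Q)+1"
        using xe Q8 by (simp add: s3; use Q3 in linarith)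
    qed
    have C_12_2: "\<not> coset_leader n x" if xe: "x = 12*Q+3"
    proof (rule N[where h=12 and e=2 and w="3"])
      show "x \<le> 13*Q" "2 \<le> (3::nat)" "Q*12 \<le> x" "x < Q*Suc 12" "x - Q*12 = 3" using xe Q8 by simp_all
      show "(12 mod 2^2)*2^(4-2)*(Q*Q) + 2^(4-2)*(Q*(3)) - 12 div 2^2 < x \<or>
        (12 mod 2^2)*2^(4-2)*(Q*Q) + 2^(4-2)*(Q*(3)) - 12 div 2^2 + x > 16*(Q*Q)+1"
        using xe Q8 by (simp add: s3; use Q3 in linarith)
    qed
    have r2: "x = 8*Q-3 \<or> x=8*Q-1 \<or> x = 8*Q+1 \<or> x = 8*Q+3" if "8*Q-3 \<le> x" "x \<le> 8*Q+3"
      using that assms(4) Q8 unfolding R by presburger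
    have r3: "x = 10*Q-1 \<or> x = 10*Q+1" if "8*Q+2*Q-1 \<le> x" "x \<le> 8*Q+2*Q+1"
      using that assms(4) Q8 unfolding R by presburger
    have r4: "x = 12*Q-1 \<or> x = 12*Q+1 \<or> x = 12*Q+3" if "8*Q+4*Q-1 \<le> x" "x \<le> 8*Q+4*Q+3"
      using that assms(4) Q8 unfolding R by presburger
    show "\<not> coset_leader n x"
      using a
    proof (elim disjE conjE)
      assume "x = 4*Q+1" thus ?thesis by (rule C_4_2)
    next
      assume "8*Q-3 \<le> x" "x \<le> 8*Q+3"
      from r2[OF this] show ?thesis using C_7_3 C_7_2 C_8_1 C_8_3 by (elim disjE) simp_all
    next
      assume "8*Q+2*Q-1 \<le> x" "x \<le> 8*Q+2*Q+1"
      from r3[OF this] show ?thesis using C_9_1 C_10_1 by (elim disjE) simp_all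
    next
      assume "8*Q+4*Q-1 \<le> x" "x \<le> 8*Q+4*Q+3"
      from r4[OF this] show ?thesis using C_11_1 C_12_1 C_12_2 by (elim disjE) simp_all
    qed
  qed
qed

end
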